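(* Let $N, D \ge 1$, let $X \in \mathbb{R}^{N\times D}$, and let $\lambda^2>0$, $\rho^2>0$. For $\sigma^2>0$ set $\gamma=\exp(-\lambda^2/(2\sigma^2))$. For a feature allocation $(K^+,Z)$ with $Z'Z$ invertible define $p(X,Z)=p(X\mid Z)\,p(Z)$ where $$p(Z)=\frac{\gamma^{K^+}\exp\{-\sum_{n=1}^N\gamma/n\}}{\prod_{h=1}^H\tilde K_h!}\prod_{k=1}^{K^+}S_{N,k}^{-1}\binom{N}{S_{N,k}}^{-1}$$ and $p(X\mid Z)=\int p(X\mid Z,A)\,p(A)\,dA$ with $p(X\mid Z,A)=(2\pi\sigma^2)^{-ND/2}\exp\{-\operatorname{tr}((X-ZA)'(X-ZA))/(2\sigma^2)\}$ and the rows of $A\in\mathbb{R}^{K^+\times D}$ i.i.d. $\mathcal{N}(0,\rho^2I_D)$ under $p(A)$. Then for fixed $K^+,Z$, as $\sigma^2\to0$, $$-2\sigma^2\log p(X,Z)\sim\operatorname{tr}\big(X'(I_N-Z(Z'Z)^{-1}Z')X\big)+K^+\lambda^2,$$ so the MAP problem for $Z$ is asymptotically equivalent to $\operatorname{argmin}_{K^+,Z}\operatorname{tr}(X'(I_N-Z(Z'Z)^{-1}Z')X)+K^+\lambda^2$.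
   Context: A feature allocation is an integer $K^+\ge0$ and a binary matrix $Z=(z_{nk})\in\{0,1\}^{N\times K^+}$ with every column nonzero (rows may have any number of ones). $S_{N,k}=\sum_nz_{nk}$; $H$ is the number of distinct columns of $Z$ and $\tilde K_h$ is the number of columns equal to the $h$-th distinct column. $p(Z)$ is the Indian buffet process probability with mass parameter $\gamma$. $f(\sigma^2)\sim g(\sigma^2)$ means $f(\sigma^2)/g(\sigma^2)\to1$ as $\sigma^2\to0$. *)

theory Defs
  imports "Jordan_Normal_Form.Gauss_Jordan_Elimination" "HOL-Probability.Probability"
    "HOL-Library.Landau_Symbols"
begin

definition mat_trace :: "real mat \<Rightarrow> real" where
  "mat_trace A = (\<Sum>i<dim_row A. A $$ (i, i))"

(* A feature allocation with K^+ = dim_col Z features on N = dim_row Z objects: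
   binary entries and every column nonzero. *)
definition feature_allocation :: "real mat \<Rightarrow> bool" where
  "feature_allocation Z \<longleftrightarrow>
     (\<forall>n<dim_row Z. \<forall>k<dim_col Z. Z $$ (n, k) = 0 \<or> Z $$ (n, k) = 1) \<and>
     (\<forall>k<dim_col Z. \<exists>n<dim_row Z. Z $$ (n, k) = 1)"

definition feat_count :: "real mat \<Rightarrow> nat \<Rightarrow> nat" where
  "feat_count Z k = card {n. n < dim_row Z \<and> Z $$ (n, k) = 1}"

(* The product over distinct columns h of Ktilde_h! is written as the product,
   over the set of distinct columns c, of (number of columns equal to c)!. *)
definition ibp_prob :: "real \<Rightarrow> real mat \<Rightarrow> real" where
  "ibp_prob \<gamma> Z =
     (let N = dim_row Z; K = dim_col Z in
      \<gamma> ^ K * exp (- (\<Sum>n=1..N. \<gamma> / real n))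
      / (\<Prod>c\<in>{Matrix.col Z k | k. k < K}. fact (card {k. k < K \<and> Matrix.col Z k = c}))
      * (\<Prod>k<K. 1 / (real (feat_count Z k) * real (N choose feat_count Z k))))"

definition lik_XZA :: "real \<Rightarrow> real mat \<Rightarrow> real mat \<Rightarrow> real mat \<Rightarrow> real" where
  "lik_XZA s X Z A =
     (2 * pi * s) powr (- real (dim_row X * dim_col X) / 2)
     * exp (- mat_trace ((X - Z * A)\<^sup>T * (X - Z * A)) / (2 * s))"

(* p(X | Z) = integral over A in R^{K x D} of p(X|Z,A) p(A) dA, entries of A
   i.i.d. N(0, rho^2) (i.e. rows i.i.d. N(0, rho^2 I_D)). *)
definition marg_XZ :: "real \<Rightarrow> real \<Rightarrow> real mat \<Rightarrow> real mat \<Rightarrow> real" where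
  "marg_XZ s rho2 X Z =
     (let K = dim_col Z; D = dim_col X; I = {0..<K} \<times> {0..<D} in
      \<integral>a. lik_XZA s X Z (Matrix.mat K D a)
            * (\<Prod>i\<in>I. normal_density 0 (sqrt rho2) (a i))
        \<partial>(PiM I (\<lambda>_. lborel)))"

definition joint_XZ :: "real \<Rightarrow> real \<Rightarrow> real \<Rightarrow> real mat \<Rightarrow> real mat \<Rightarrow> real" where
  "joint_XZ s lam2 rho2 X Z = marg_XZ s rho2 X Z * ibp_prob (exp (- lam2 / (2 * s))) Z"

end

theory Submission
  imports Defs "HOL-Real_Asymp.Real_Asymp"
begin


definition sqn :: "real mat \<Rightarrow> real" where
  "sqn W = (\<Sum>i<dim_row W. \<Sum>j<dim_col W. (W $$ (i,j))^2)"

lemma mult_entry: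
  assumes "A \<in> carrier_mat n m" "B \<in> carrier_mat m p" "i < n" "j < p"
  shows "(A * B) $$ (i,j) = (\<Sum>k<m. A $$ (i,k) * B $$ (k,j))"
  using assms by (simp add: scalar_prod_def lessThan_atLeast0)

lemma trace_TT:
  fixes W :: "real mat"
  assumes "W \<in> carrier_mat n m"
  shows "mat_trace (W\<^sup>T * W) = sqn W"
proof -
  have "mat_trace (W\<^sup>T * W) = (\<Sum>j<m. \<Sum>i<n. W $$ (i,j) * W $$ (i,j))"
  proof -
    have d: "dim_row (W\<^sup>T * W) = m" using assms by simp
    show ?thesis unfolding mat_trace_def d
      by (intro sum.cong refl, subst mult_entry[of _ m n _ m], insert assms, auto)
  qed
  also have "\<dots> = sqn W"
    unfolding sqn_def using assms by (subst sum.swap) (auto simp: power2_eq_square)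
  finally show ?thesis .
qed

lemma cross_zero:
  fixes Z R B :: "real mat"
  assumes Z: "Z \<in> carrier_mat N K" and R: "R \<in> carrier_mat N D" and B: "B \<in> carrier_mat K D"
    and ZR: "Z\<^sup>T * R = 0\<^sub>m K D"
  shows "(\<Sum>i<N. \<Sum>j<D. R $$ (i,j) * (Z * B) $$ (i,j)) = 0"
proof -
  have "(\<Sum>i<N. \<Sum>j<D. R $$ (i,j) * (Z * B) $$ (i,j))
      = (\<Sum>i<N. \<Sum>j<D. \<Sum>k<K. R $$ (i,j) * (Z $$ (i,k) * B $$ (k,j)))"
    by (intro sum.cong refl, subst mult_entry[OF Z B], auto simp: sum_distrib_left)
  also have "\<dots> = (\<Sum>k<K. \<Sum>j<D. B $$ (k,j) * (\<Sum>i<N. Z $$ (i,k) * R $$ (i,j)))"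
  proof -
    define f where "f i j k = R $$ (i,j) * (Z $$ (i,k) * B $$ (k,j))" for i j k
    have "(\<Sum>i<N. \<Sum>j<D. \<Sum>k<K. f i j k) = (\<Sum>i<N. \<Sum>k<K. \<Sum>j<D. f i j k)"
      by (rule sum.cong[OF refl], rule sum.swap)
    also have "\<dots> = (\<Sum>k<K. \<Sum>i<N. \<Sum>j<D. f i j k)" by (rule sum.swap)
    also have "\<dots> = (\<Sum>k<K. \<Sum>j<D. \<Sum>i<N. f i j k)"
      by (rule sum.cong[OF refl], rule sum.swap)
    also have "\<dots> = (\<Sum>k<K. \<Sum>j<D. B $$ (k,j) * (\<Sum>i<N. Z $$ (i,k) * R $$ (i,j)))"
      unfolding f_def by (simp add: sum_distrib_left algebra_simps)
    finally show ?thesis unfolding f_def .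
  qed
  also have "\<dots> = (\<Sum>k<K. \<Sum>j<D. B $$ (k,j) * (Z\<^sup>T * R) $$ (k,j))"
    using Z R by (intro sum.cong refl) (simp add: scalar_prod_def lessThan_atLeast0)
  also have "\<dots> = 0" using ZR by simp
  finally show ?thesis .
qed

lemma trace_TR:
  fixes X R :: "real mat"
  assumes "X \<in> carrier_mat n m" "R \<in> carrier_mat n m"
  shows "mat_trace (X\<^sup>T * R) = (\<Sum>i<n. \<Sum>j<m. X $$ (i,j) * R $$ (i,j))"
proof -
  have d: "dim_row (X\<^sup>T * R) = m" using assms by simp
  have "mat_trace (X\<^sup>T * R) = (\<Sum>j<m. \<Sum>i<n. X $$ (i,j) * R $$ (i,j))"
    unfolding mat_trace_def d
    by (intro sum.cong refl, subst mult_entry[of _ m n _ m], insert assms, auto)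
  also have "\<dots> = (\<Sum>i<n. \<Sum>j<m. X $$ (i,j) * R $$ (i,j))" by (rule sum.swap)
  finally show ?thesis .
qed

lemma main_identity:
  fixes X Z M A :: "real mat"
  assumes Z: "Z \<in> carrier_mat N K" and X: "X \<in> carrier_mat N D" and M: "M \<in> carrier_mat K K"
    and GM: "(Z\<^sup>T * Z) * M = 1\<^sub>m K" and A: "A \<in> carrier_mat K D"
  shows "mat_trace ((X - Z * A)\<^sup>T * (X - Z * A)) =
         mat_trace (X\<^sup>T * (1\<^sub>m N - Z * M * Z\<^sup>T) * X) + sqn (Z * (M * (Z\<^sup>T * X) - A))"
proof -
  define As where "As = M * (Z\<^sup>T * X)"
  have As: "As \<in> carrier_mat K D" unfolding As_def using M Z X by auto
  define R where "R = X - Z * As"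
  have R: "R \<in> carrier_mat N D" unfolding R_def using X Z As by auto
  have ZT: "Z\<^sup>T \<in> carrier_mat K N" using Z by simp
  have ZR: "Z\<^sup>T * R = 0\<^sub>m K D"
  proof -
    have "Z\<^sup>T * R = Z\<^sup>T * X - Z\<^sup>T * (Z * As)"
      unfolding R_def using ZT X Z As by (subst mult_minus_distrib_mat[of _ K N]) auto
    also have "Z\<^sup>T * (Z * As) = ((Z\<^sup>T * Z) * M) * (Z\<^sup>T * X)"
    proof -
      have Y: "Z\<^sup>T * X \<in> carrier_mat K D" using ZT X by auto
      have "((Z\<^sup>T * Z) * M) * (Z\<^sup>T * X) = (Z\<^sup>T * Z) * (M * (Z\<^sup>T * X))"
        by (rule assoc_mult_mat[OF _ M Y], insert ZT Z, auto)
      also have "\<dots> = Z\<^sup>T * (Z * (M * (Z\<^sup>T * X)))"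
        by (rule assoc_mult_mat[OF ZT Z], insert M Y, auto)
      finally show ?thesis unfolding As_def by simp
    qed
    also have "\<dots> = Z\<^sup>T * X" using GM ZT X by simp
    also have "Z\<^sup>T * X - Z\<^sup>T * X = 0\<^sub>m K D" using ZT X by simp
    finally show ?thesis .
  qed
  define B where "B = As - A"
  have B: "B \<in> carrier_mat K D" unfolding B_def using As A by auto
  have ZB: "Z * B \<in> carrier_mat N D" using Z B by auto
  have ent: "(X - Z * A) $$ (i,j) = R $$ (i,j) + (Z * B) $$ (i,j)" if "i < N" "j < D" for i j
  proof -
    have "Z * B = Z * As - Z * A" unfolding B_def using Z As A by (simp add: mult_minus_distrib_mat)
    then show ?thesis unfolding R_def using that X Z As A by simp
  qed
  have XZA: "X - Z * A \<in> carrier_mat N D" using X Z A by auto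
  have "mat_trace ((X - Z * A)\<^sup>T * (X - Z * A)) = sqn (X - Z * A)"
    by (rule trace_TT[OF XZA])
  also have "\<dots> = (\<Sum>i<N. \<Sum>j<D. (R $$ (i,j) + (Z * B) $$ (i,j))^2)"
    unfolding sqn_def using XZA by (intro sum.cong refl) (auto simp: ent)
  also have "\<dots> = (\<Sum>i<N. \<Sum>j<D. (R $$ (i,j))^2) + 2 * (\<Sum>i<N. \<Sum>j<D. R $$ (i,j) * (Z * B) $$ (i,j))
       + (\<Sum>i<N. \<Sum>j<D. ((Z * B) $$ (i,j))^2)"
    by (simp add: power2_sum sum.distrib sum_distrib_left mult.assoc)
  also have "(\<Sum>i<N. \<Sum>j<D. R $$ (i,j) * (Z * B) $$ (i,j)) = 0"
    by (rule cross_zero[OF Z R B ZR])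
  also have "(\<Sum>i<N. \<Sum>j<D. ((Z * B) $$ (i,j))^2) = sqn (Z * B)"
  proof -
    have d: "dim_row (Z * B) = N" "dim_col (Z * B) = D" using ZB by auto
    show ?thesis unfolding sqn_def d ..
  qed
  also have "(\<Sum>i<N. \<Sum>j<D. (R $$ (i,j))^2) = mat_trace (X\<^sup>T * (1\<^sub>m N - Z * M * Z\<^sup>T) * X)"
  proof -
    have e2: "(R $$ (i,j))^2 = R $$ (i,j) * X $$ (i,j) - R $$ (i,j) * (Z * As) $$ (i,j)"
      if "i < N" "j < D" for i j
      unfolding R_def using that X Z As by (simp add: power2_eq_square algebra_simps)
    have "(\<Sum>i<N. \<Sum>j<D. (R $$ (i,j))^2) = (\<Sum>i<N. \<Sum>j<D. X $$ (i,j) * R $$ (i,j))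
          - (\<Sum>i<N. \<Sum>j<D. R $$ (i,j) * (Z * As) $$ (i,j))"
      by (simp add: e2 sum_subtractf mult.commute)
    also have "(\<Sum>i<N. \<Sum>j<D. R $$ (i,j) * (Z * As) $$ (i,j)) = 0"
      by (rule cross_zero[OF Z R As ZR])
    also have "(\<Sum>i<N. \<Sum>j<D. X $$ (i,j) * R $$ (i,j)) = mat_trace (X\<^sup>T * R)"
      by (rule trace_TR[OF X R, symmetric])
    also have "X\<^sup>T * R = X\<^sup>T * (1\<^sub>m N - Z * M * Z\<^sup>T) * X"
    proof -
      have P: "Z * M * Z\<^sup>T \<in> carrier_mat N N" using Z M by auto
      have "(1\<^sub>m N - Z * M * Z\<^sup>T) * X = X - Z * M * Z\<^sup>T * X"
        using P X by (subst minus_mult_distrib_mat[of _ N N]) auto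
      also have "Z * M * Z\<^sup>T * X = Z * As"
      proof -
        have ZT: "Z\<^sup>T \<in> carrier_mat K N" using Z by simp
        have "Z * M * Z\<^sup>T * X = (Z * M) * (Z\<^sup>T * X)"
          by (rule assoc_mult_mat[OF _ ZT X], insert Z M, auto)
        also have "\<dots> = Z * (M * (Z\<^sup>T * X))"
          by (rule assoc_mult_mat[OF Z M], insert ZT X, auto)
        finally show ?thesis unfolding As_def .
      qed
      finally have "(1\<^sub>m N - Z * M * Z\<^sup>T) * X = R" unfolding R_def .
      moreover have "X\<^sup>T * (1\<^sub>m N - Z * M * Z\<^sup>T) * X = X\<^sup>T * ((1\<^sub>m N - Z * M * Z\<^sup>T) * X)"
        by (rule assoc_mult_mat[of _ D N _ N X D], insert X P, auto intro!: minus_carrier_mat)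
      ultimately show ?thesis by simp
    qed
    finally show ?thesis by simp
  qed
  finally show ?thesis unfolding B_def As_def by simp
qed


lemma marg_bounds:
  fixes X Z As :: "real mat" and N D K :: nat and s rho2 T E c \<delta> :: real
  assumes X: "X \<in> carrier_mat N D" and Z: "Z \<in> carrier_mat N K"
    and rho: "rho2 > 0" and s: "s > 0" and c: "c \<ge> 0" and \<delta>: "\<delta> \<ge> 0"
    and Qlow: "\<And>A. A \<in> carrier_mat K D \<Longrightarrow> T \<le> mat_trace ((X - Z * A)\<^sup>T * (X - Z * A))"
    and Qhigh: "\<And>A. A \<in> carrier_mat K D \<Longrightarrow> (\<forall>k<K. \<forall>j<D. \<bar>A $$ (k,j) - As $$ (k,j)\<bar> \<le> \<delta>)
                 \<Longrightarrow> mat_trace ((X - Z * A)\<^sup>T * (X - Z * A)) \<le> T + E"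
    and dens: "\<And>k j x. k < K \<Longrightarrow> j < D \<Longrightarrow> \<bar>x - As $$ (k,j)\<bar> \<le> \<delta> \<Longrightarrow>
                 c \<le> normal_density 0 (sqrt rho2) x"
  shows "(2 * pi * s) powr (- real (N * D) / 2) * exp (- (T + E) / (2 * s)) * (c * (2 * \<delta>)) ^ (K * D)
           \<le> marg_XZ s rho2 X Z"
    and "marg_XZ s rho2 X Z \<le> (2 * pi * s) powr (- real (N * D) / 2) * exp (- T / (2 * s))"
proof -
  interpret product_sigma_finite "\<lambda>_. lborel :: real measure" by standard
  define I where "I = {0..<K} \<times> {0..<D}"
  have finI: "finite I" unfolding I_def by simp
  have cardI: "card I = K * D" unfolding I_def by (simp add: card_cartesian_product)
  define PM where "PM = PiM I (\<lambda>_. lborel :: real measure)"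
  define C where "C = (2 * pi * s) powr (- real (N * D) / 2)"
  have C: "C > 0" unfolding C_def using s by simp
  define Q where "Q a = mat_trace ((X - Z * Matrix.mat K D a)\<^sup>T * (X - Z * Matrix.mat K D a))" for a
  define dn where "dn a = (\<Prod>i\<in>I. normal_density 0 (sqrt rho2) (a i))" for a :: "nat \<times> nat \<Rightarrow> real"
  define h where "h a = C * exp (- Q a / (2 * s)) * dn a" for a
  have dims: "dim_row X = N" "dim_col X = D" "dim_col Z = K" using X Z by auto
  have marg: "marg_XZ s rho2 X Z = integral\<^sup>L PM h"
    unfolding marg_XZ_def Let_def dims PM_def I_def[symmetric] h_def lik_XZA_def C_def Q_def dn_def
    by (simp add: dims mult.assoc)
  have sig: "sqrt rho2 > 0" using rho by simp
  have dn_int: "integrable PM dn"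
    unfolding PM_def dn_def by (rule product_integrable_prod[OF finI]) (simp add: integrable_normal_density[OF sig])
  have dn_integral: "integral\<^sup>L PM dn = 1"
    unfolding PM_def dn_def by (subst product_integral_prod[OF finI])
      (auto simp: integrable_normal_density[OF sig] integral_normal_density[OF sig])
  have dn_nn: "dn a \<ge> 0" for a unfolding dn_def by (intro prod_nonneg) auto
  have Qsum: "Q a = (\<Sum>i<N. \<Sum>j<D. (X $$ (i,j) - (\<Sum>k<K. Z $$ (i,k) * a (k,j)))^2)" for a
  proof -
    have W: "X - Z * Matrix.mat K D a \<in> carrier_mat N D" using X Z by auto
    have e: "(X - Z * Matrix.mat K D a) $$ (i,j) = X $$ (i,j) - (\<Sum>k<K. Z $$ (i,k) * a (k,j))"
      if "i < N" "j < D" for i j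
      using that X Z by (simp add: scalar_prod_def lessThan_atLeast0)
    have d: "dim_row (X - Z * Matrix.mat K D a) = N" "dim_col (X - Z * Matrix.mat K D a) = D" using W by auto
    show ?thesis unfolding Q_def trace_TT[OF W] sqn_def d by (intro sum.cong refl) (simp add: e)
  qed
  have Q_nn: "Q a \<ge> 0" for a unfolding Qsum by (intro sum_nonneg) auto
  have Qmeas: "Q \<in> borel_measurable PM"
  proof -
    have "(\<lambda>a. \<Sum>i<N. \<Sum>j<D. (X $$ (i,j) - (\<Sum>k<K. Z $$ (i,k) * a (k,j)))^2) \<in> borel_measurable PM"
    proof (intro borel_measurable_sum borel_measurable_power borel_measurable_diff borel_measurable_const
          borel_measurable_times)
      fix i j k assume "j \<in> {..<D}" "k \<in> {..<K}"
      then have "(k,j) \<in> I" unfolding I_def by auto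
      then show "(\<lambda>a. a (k,j)) \<in> borel_measurable PM"
        unfolding PM_def by (rule measurable_component_singleton[where M="\<lambda>_. lborel", simplified])
    qed
    then show ?thesis by (simp add: Qsum[abs_def])
  qed
  have h_meas: "h \<in> borel_measurable PM"
    unfolding h_def using Qmeas borel_measurable_integrable[OF dn_int] by measurable
  have h_int: "integrable PM h"
  proof (rule Bochner_Integration.integrable_bound[OF integrable_mult_right[OF dn_int] h_meas])
    show "AE x in PM. norm (h x) \<le> norm (C * dn x)"
    proof (intro AE_I2)
      fix x
      have "exp (- Q x / (2 * s)) \<le> 1" using Q_nn[of x] s by simp
      then show "norm (h x) \<le> norm (C * dn x)"
        using C dn_nn[of x] by (auto simp: h_def abs_mult intro!: mult_left_le_one_le)
    qed
  qed
  show "marg_XZ s rho2 X Z \<le> (2 * pi * s) powr (- real (N * D) / 2) * exp (- T / (2 * s))"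
  proof -
    have "integral\<^sup>L PM h \<le> integral\<^sup>L PM (\<lambda>a. (C * exp (- T / (2 * s))) * dn a)"
    proof (rule integral_mono[OF h_int])
      show "integrable PM (\<lambda>a. (C * exp (- T / (2 * s))) * dn a)" using dn_int by simp
      fix a assume a: "a \<in> space PM"
      have "T \<le> Q a" unfolding Q_def by (rule Qlow) auto
      then have "exp (- Q a / (2 * s)) \<le> exp (- T / (2 * s))"
        using s by (simp add: divide_right_mono)
      then show "h a \<le> (C * exp (- T / (2 * s))) * dn a"
        unfolding h_def using C dn_nn by (intro mult_right_mono mult_left_mono) auto
    qed
    also have "\<dots> = C * exp (- T / (2 * s))" using dn_integral by simp
    finally show ?thesis unfolding marg C_def .
  qed
  show "(2 * pi * s) powr (- real (N * D) / 2) * exp (- (T + E) / (2 * s)) * (c * (2 * \<delta>)) ^ (K * D)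
           \<le> marg_XZ s rho2 X Z"
  proof -
    define V where "V = C * exp (- (T + E) / (2 * s))"
    have V: "V \<ge> 0" unfolding V_def using C by simp
    define lo where "lo i = As $$ (fst i, snd i) - \<delta>" for i :: "nat \<times> nat"
    define hi where "hi i = As $$ (fst i, snd i) + \<delta>" for i :: "nat \<times> nat"
    define g where "g a = V * (\<Prod>i\<in>I. c * indicator {lo i..hi i} (a i))" for a :: "nat \<times> nat \<Rightarrow> real"
    have ind_int0: "integrable lborel (indicator {lo i..hi i} :: real \<Rightarrow> real)" for i
      by (auto intro!: integrable_real_indicator simp: emeasure_lborel_Icc_eq)
    have ind_int: "integrable lborel (\<lambda>x::real. c * indicator {lo i..hi i} x)" for i
      by (intro integrable_mult_right ind_int0)
    have g_int: "integrable PM g"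
      unfolding g_def PM_def
      by (intro integrable_mult_right product_integrable_prod[OF finI] ind_int)
    have g_integral: "integral\<^sup>L PM g = V * (c * (2 * \<delta>)) ^ (K * D)"
    proof -
      have "integral\<^sup>L PM g = V * (\<Prod>i\<in>I. \<integral>x. c * indicator {lo i..hi i} x \<partial>lborel)"
        unfolding g_def PM_def by (subst integral_mult_right_zero, subst product_integral_prod[OF finI])
          (auto intro: ind_int simp: ind_int0)
      also have "(\<Prod>i\<in>I. \<integral>x. c * indicator {lo i..hi i} x \<partial>lborel) = (\<Prod>i\<in>I. c * (2 * \<delta>))"
        using \<delta> by (intro prod.cong refl) (simp add: lo_def hi_def)
      also have "\<dots> = (c * (2 * \<delta>)) ^ (K * D)" by (simp add: cardI)
      finally show ?thesis .
    qed
    have "integral\<^sup>L PM g \<le> integral\<^sup>L PM h"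
    proof (rule integral_mono[OF g_int h_int])
      fix a assume a: "a \<in> space PM"
      show "g a \<le> h a"
      proof (cases "\<forall>i\<in>I. a i \<in> {lo i..hi i}")
        case True
        have close: "\<bar>a (k,j) - As $$ (k,j)\<bar> \<le> \<delta>" if "k < K" "j < D" for k j
        proof -
          have "(k,j) \<in> I" using that unfolding I_def by auto
          with True have "a (k,j) \<in> {lo (k,j)..hi (k,j)}" by blast
          then show ?thesis unfolding lo_def hi_def by auto
        qed
        have "Q a \<le> T + E" unfolding Q_def
          by (rule Qhigh) (use close in auto)
        then have "- (T + E) / (2 * s) \<le> - Q a / (2 * s)"
          using s by (intro divide_right_mono) auto
        then have e1: "exp (- (T + E) / (2 * s)) \<le> exp (- Q a / (2 * s))" by simp
        have "g a = V * c ^ (K * D)"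
          unfolding g_def using True by (simp add: cardI[symmetric] indicator_def)
        also have "c ^ (K * D) = (\<Prod>i\<in>I. c)" by (simp add: cardI)
        also have "(\<Prod>i\<in>I. c) \<le> dn a"
          unfolding dn_def
        proof (rule prod_mono, safe)
          fix k j assume "(k,j) \<in> I"
          then have kj: "k < K" "j < D" unfolding I_def by auto
          show "0 \<le> c" by (rule c)
          show "c \<le> normal_density 0 (sqrt rho2) (a (k,j))" by (rule dens[OF kj close[OF kj]])
        qed
        finally have "g a \<le> V * dn a" using V by (simp add: mult_left_mono)
        also have "V * dn a \<le> h a" unfolding V_def h_def
          using e1 C dn_nn[of a] by (auto intro!: mult_right_mono mult_left_mono)
        finally show ?thesis .
      next
        case False
        then obtain i where "i \<in> I" "a i \<notin> {lo i..hi i}" by blast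
        then have "g a = 0" unfolding g_def using finI by (auto intro!: prod_zero bexI[of _ i])
        moreover have "h a \<ge> 0" unfolding h_def using C dn_nn[of a] by simp
        ultimately show ?thesis by simp
      qed
    qed
    then show ?thesis unfolding marg g_integral V_def C_def by simp
  qed
qed

lemma sqn_nonneg: "sqn W \<ge> 0"
  unfolding sqn_def by (intro sum_nonneg) auto

lemma sqn_bound:
  fixes Z B :: "real mat" and \<delta> :: real
  assumes Z: "Z \<in> carrier_mat N K" and B: "B \<in> carrier_mat K D" and d: "\<delta> \<ge> 0"
    and Zb: "\<And>i k. i < N \<Longrightarrow> k < K \<Longrightarrow> \<bar>Z $$ (i,k)\<bar> \<le> 1"
    and Bb: "\<And>k j. k < K \<Longrightarrow> j < D \<Longrightarrow> \<bar>B $$ (k,j)\<bar> \<le> \<delta>"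
  shows "sqn (Z * B) \<le> real (N * D * K^2) * \<delta>^2"
proof -
  have ZB: "Z * B \<in> carrier_mat N D" using Z B by auto
  have d2: "dim_row (Z * B) = N" "dim_col (Z * B) = D" using ZB by auto
  have ent: "((Z * B) $$ (i,j))^2 \<le> (real K * \<delta>)^2" if "i < N" "j < D" for i j
  proof -
    have "\<bar>(Z * B) $$ (i,j)\<bar> = \<bar>\<Sum>k<K. Z $$ (i,k) * B $$ (k,j)\<bar>"
      using mult_entry[OF Z B that] by simp
    also have "\<dots> \<le> (\<Sum>k<K. \<bar>Z $$ (i,k) * B $$ (k,j)\<bar>)" by (rule sum_abs)
    also have "\<dots> \<le> (\<Sum>k<K. 1 * \<delta>)"
    proof (intro sum_mono)
      fix k assume k: "k \<in> {..<K}"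
      have "\<bar>Z $$ (i,k)\<bar> * \<bar>B $$ (k,j)\<bar> \<le> 1 * \<delta>"
        using k that by (intro mult_mono Zb Bb) auto
      then show "\<bar>Z $$ (i,k) * B $$ (k,j)\<bar> \<le> 1 * \<delta>" by (simp add: abs_mult)
    qed
    also have "\<dots> = real K * \<delta>" by simp
    finally have "\<bar>(Z * B) $$ (i,j)\<bar> \<le> real K * \<delta>" .
    from power_mono[OF this abs_ge_zero, of 2] show ?thesis by simp
  qed
  have "sqn (Z * B) \<le> (\<Sum>i<N. \<Sum>j<D. (real K * \<delta>)^2)"
    unfolding sqn_def d2 by (intro sum_mono) (auto intro: ent)
  also have "\<dots> = real (N * D * K^2) * \<delta>^2" by (simp add: power_mult_distrib)
  finally show ?thesis .
qed

lemma inverse_exists: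
  fixes Z :: "real mat"
  assumes Z: "Z \<in> carrier_mat N K" and inv: "invertible_mat (Z\<^sup>T * Z)"
  shows "the (mat_inverse (Z\<^sup>T * Z)) \<in> carrier_mat K K \<and> (Z\<^sup>T * Z) * the (mat_inverse (Z\<^sup>T * Z)) = 1\<^sub>m K"
proof -
  have G: "Z\<^sup>T * Z \<in> carrier_mat K K" using Z by auto
  show ?thesis
  proof (cases "mat_inverse (Z\<^sup>T * Z)")
    case None
    have nu: "Z\<^sup>T * Z \<notin> Units (ring_mat TYPE(real) K undefined)"
      by (rule mat_inverse(1)[OF G None])
    from inv obtain B where B1: "inverts_mat (Z\<^sup>T * Z) B" and B2: "inverts_mat B (Z\<^sup>T * Z)"
      unfolding invertible_mat_def by blast
    have dG: "dim_row (Z\<^sup>T * Z) = K" "dim_col (Z\<^sup>T * Z) = K" using G by auto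
    have GB: "(Z\<^sup>T * Z) * B = 1\<^sub>m K" using B1 dG unfolding inverts_mat_def by simp
    have "dim_col ((Z\<^sup>T * Z) * B) = K" unfolding GB by simp
    then have cB: "dim_col B = K" by simp
    have B2': "B * (Z\<^sup>T * Z) = 1\<^sub>m (dim_row B)" using B2 unfolding inverts_mat_def .
    have d1: "dim_col (B * (Z\<^sup>T * Z)) = K" using dG(2) by (simp only: index_mult_mat(3))
    have d2: "dim_col (B * (Z\<^sup>T * Z)) = dim_row B" unfolding B2' by (rule index_one_mat(3))
    have rB: "dim_row B = K" using d1 d2 by linarith
    have BG: "B * (Z\<^sup>T * Z) = 1\<^sub>m K" using B2' rB by (simp only:)
    have Bc: "B \<in> carrier_mat K K" using cB rB by (simp only: carrier_mat_def mem_Collect_eq)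
    have "Z\<^sup>T * Z \<in> Units (ring_mat TYPE(real) K undefined)"
      unfolding Units_def ring_mat_simps
      by (rule CollectI, rule conjI[OF G], rule bexI[OF _ Bc], rule conjI[OF BG GB])
    with nu show ?thesis by blast
  next
    case (Some M)
    have "Z\<^sup>T * Z * M = 1\<^sub>m K \<and> M * (Z\<^sup>T * Z) = 1\<^sub>m K \<and> M \<in> carrier_mat K K"
      by (rule mat_inverse(2)[OF G Some])
    then show ?thesis unfolding Some option.sel by blast
  qed
qed

lemma density_lower:
  assumes "\<bar>x\<bar> \<le> r"
  shows "normal_density 0 \<sigma> r \<le> normal_density 0 \<sigma> x"
proof -
  have "x^2 \<le> r^2" using power_mono[OF assms abs_ge_zero, of 2] by simp
  then have "(-(r^2)) / (2 * \<sigma>^2) \<le> (-(x^2)) / (2 * \<sigma>^2)"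
    by (intro divide_right_mono) auto
  then show ?thesis unfolding normal_density_def
    by (intro mult_left_mono) auto
qed



lemma ibp_decomp:
  fixes Z :: "real mat"
  assumes fa: "feature_allocation Z"
  shows "\<exists>W>0. \<forall>\<gamma>. ibp_prob \<gamma> Z = \<gamma> ^ dim_col Z * exp (- (\<gamma> * (\<Sum>n=1..dim_row Z. 1 / real n))) * W"
proof -
  define N where "N = dim_row Z"
  define K where "K = dim_col Z"
  define Pf :: real where "Pf = (\<Prod>c\<in>{Matrix.col Z k | k. k < K}. fact (card {k. k < K \<and> Matrix.col Z k = c}))"
  define Pc :: real where "Pc = (\<Prod>k<K. 1 / (real (feat_count Z k) * real (N choose feat_count Z k)))"
  have Pf: "Pf > 0" unfolding Pf_def by (intro prod_pos) auto
  have fc: "1 \<le> feat_count Z k \<and> feat_count Z k \<le> N" if "k < K" for k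
  proof -
    from fa that obtain n where n: "n < N" "Z $$ (n,k) = 1"
      unfolding feature_allocation_def N_def K_def by blast
    have sub: "{n. n < dim_row Z \<and> Z $$ (n, k) = 1} \<subseteq> {..<N}" unfolding N_def by auto
    have fin: "finite {n. n < dim_row Z \<and> Z $$ (n, k) = 1}" using finite_subset[OF sub] by simp
    have "n \<in> {n. n < dim_row Z \<and> Z $$ (n, k) = 1}" using n unfolding N_def by simp
    then have c1: "0 < card {n. n < dim_row Z \<and> Z $$ (n, k) = 1}" using fin card_gt_0_iff by blast
    have c2: "card {n. n < dim_row Z \<and> Z $$ (n, k) = 1} \<le> N"
      using card_mono[OF _ sub] by simp
    show ?thesis unfolding feat_count_def using c1 c2 by linarith
  qed
  have Pc: "Pc > 0" unfolding Pc_def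
  proof (intro prod_pos)
    fix k assume "k \<in> {..<K}"
    then have "1 \<le> feat_count Z k" "feat_count Z k \<le> N" using fc by auto
    then show "0 < 1 / (real (feat_count Z k) * real (N choose feat_count Z k))"
      by (simp add: zero_less_binomial)
  qed
  have "ibp_prob \<gamma> Z = \<gamma> ^ K * exp (- (\<gamma> * (\<Sum>n=1..N. 1 / real n))) * (Pc / Pf)" for \<gamma>
  proof -
    have "(\<Sum>n=1..N. \<gamma> / real n) = \<gamma> * (\<Sum>n=1..N. 1 / real n)"
      by (simp add: sum_distrib_left)
    then show ?thesis unfolding ibp_prob_def Let_def N_def[symmetric] K_def[symmetric] Pf_def[symmetric] Pc_def[symmetric]
      by simp
  qed
  moreover have "Pc / Pf > 0" using Pc Pf by simp
  ultimately show ?thesis unfolding N_def K_def by blast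
qed


lemma sxlnx: "((\<lambda>s::real. s * ln s) \<longlongrightarrow> 0) (at_right 0)"
  by real_asymp


theorem mainTheorem5:
  fixes N D :: nat and X Z :: "real mat" and lam2 rho2 :: real
  assumes "N \<ge> 1" and "D \<ge> 1"
    and "X \<in> carrier_mat N D"
    and "dim_row Z = N"
    and "feature_allocation Z"
    and "invertible_mat (Z\<^sup>T * Z)"
    and "lam2 > 0" and "rho2 > 0"
    and "mat_trace (X\<^sup>T * (1\<^sub>m N - Z * the (mat_inverse (Z\<^sup>T * Z)) * Z\<^sup>T) * X)
           + real (dim_col Z) * lam2 \<noteq> 0"
  shows "(\<lambda>s. - 2 * s * ln (joint_XZ s lam2 rho2 X Z)) \<sim>[at_right 0]
         (\<lambda>s. mat_trace (X\<^sup>T * (1\<^sub>m N - Z * the (mat_inverse (Z\<^sup>T * Z)) * Z\<^sup>T) * X)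
               + real (dim_col Z) * lam2)"
proof -
  note X = assms(3) and fa = assms(5) and lam = assms(7) and rho = assms(8)
  define K where "K = dim_col Z"
  have Zc: "Z \<in> carrier_mat N K" unfolding K_def using assms(4) by auto
  define M where "M = the (mat_inverse (Z\<^sup>T * Z))"
  have M: "M \<in> carrier_mat K K" and GM: "(Z\<^sup>T * Z) * M = 1\<^sub>m K"
    using inverse_exists[OF Zc assms(6)] unfolding M_def by auto
  define T where "T = mat_trace (X\<^sup>T * (1\<^sub>m N - Z * M * Z\<^sup>T) * X)"
  define L where "L = T + real K * lam2"
  have L: "L \<noteq> 0" using assms(9) unfolding L_def T_def M_def K_def .
  define As where "As = M * (Z\<^sup>T * X)"
  have As: "As \<in> carrier_mat K D" unfolding As_def using M Zc X by auto
  have Qlow: "T \<le> mat_trace ((X - Z * A)\<^sup>T * (X - Z * A))" if "A \<in> carrier_mat K D" for A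
    unfolding main_identity[OF Zc X M GM that] T_def using sqn_nonneg by simp
  have Zb: "\<bar>Z $$ (i,k)\<bar> \<le> 1" if "i < N" "k < K" for i k
    using fa that assms(4) unfolding feature_allocation_def K_def by force
  have Qhigh: "mat_trace ((X - Z * A)\<^sup>T * (X - Z * A)) \<le> T + real (N * D * K^2) * \<delta>^2"
    if A: "A \<in> carrier_mat K D" and d: "\<delta> \<ge> 0"
      and cl: "\<forall>k<K. \<forall>j<D. \<bar>A $$ (k,j) - As $$ (k,j)\<bar> \<le> \<delta>" for A \<delta>
  proof -
    have B: "M * (Z\<^sup>T * X) - A \<in> carrier_mat K D" using As A unfolding As_def by auto
    have "sqn (Z * (M * (Z\<^sup>T * X) - A)) \<le> real (N * D * K^2) * \<delta>^2"
    proof (rule sqn_bound[OF Zc B d Zb])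
      fix k j assume "k < K" "j < D"
      then show "\<bar>(M * (Z\<^sup>T * X) - A) $$ (k, j)\<bar> \<le> \<delta>"
        using cl As A unfolding As_def[symmetric] by (auto simp: abs_minus_commute)
    qed
    then show ?thesis unfolding main_identity[OF Zc X M GM A] T_def by simp
  qed
  define R0 where "R0 = (\<Sum>k<K. \<Sum>j<D. \<bar>As $$ (k,j)\<bar>) + 1"
  define c where "c = normal_density 0 (sqrt rho2) R0"
  have c: "c > 0" unfolding c_def using rho by (intro normal_density_pos) simp
  have dens: "c \<le> normal_density 0 (sqrt rho2) x"
    if "k < K" "j < D" "\<bar>x - As $$ (k,j)\<bar> \<le> \<delta>" "\<delta> \<le> 1" for k j x \<delta>
  proof -
    have "\<bar>As $$ (k,j)\<bar> \<le> (\<Sum>j<D. \<bar>As $$ (k,j)\<bar>)"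
      using that by (intro member_le_sum) auto
    also have "\<dots> \<le> (\<Sum>k<K. \<Sum>j<D. \<bar>As $$ (k,j)\<bar>)"
      using that by (intro member_le_sum[of k "{..<K}" "\<lambda>k. \<Sum>j<D. \<bar>As $$ (k,j)\<bar>"]) (auto intro: sum_nonneg)
    finally have "\<bar>x\<bar> \<le> R0" unfolding R0_def using that by linarith
    then show ?thesis unfolding c_def by (rule density_lower)
  qed
  obtain W where W: "W > 0" and ibp: "\<And>\<gamma>. ibp_prob \<gamma> Z = \<gamma> ^ K * exp (- (\<gamma> * (\<Sum>n=1..N. 1 / real n))) * W"
    using ibp_decomp[OF fa] assms(4) unfolding K_def by blast
  define H :: real where "H = (\<Sum>n=1..N. 1 / real n)"
  have H: "H \<ge> 0" unfolding H_def by (intro sum_nonneg) auto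
  define pX where "pX s = marg_XZ s rho2 X Z" for s
  define lo where "lo s = real (N * D) * (s * ln (2 * pi) + s * ln s) + T" for s :: real
  define hi where "hi s = real (N * D) * (s * ln (2 * pi) + s * ln s) + T + real (N * D * K^2) * s
                      - 2 * real (K * D) * (s * ln (2 * c) + s * ln s / 2)" for s :: real
  have bounds: "lo s \<le> - 2 * s * ln (pX s) \<and> - 2 * s * ln (pX s) \<le> hi s \<and> pX s > 0"
    if s: "0 < s" "s \<le> 1" for s
  proof -
    define Ub where "Ub = (2 * pi * s) powr (- real (N * D) / 2) * exp (- T / (2 * s))"
    define Lb where "Lb = (2 * pi * s) powr (- real (N * D) / 2) *
        exp (- (T + real (N * D * K^2) * (sqrt s)^2) / (2 * s)) * (c * (2 * sqrt s)) ^ (K * D)"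
    have sq0: "sqrt s \<ge> 0" using s by simp
    have sq1: "sqrt s \<le> 1" using s by simp
    have q2: "mat_trace ((X - Z * A)\<^sup>T * (X - Z * A)) \<le> T + real (N * D * K^2) * (sqrt s)^2"
      if "A \<in> carrier_mat K D" "\<forall>k<K. \<forall>j<D. \<bar>A $$ (k,j) - As $$ (k,j)\<bar> \<le> sqrt s" for A
      by (rule Qhigh[OF that(1) sq0 that(2)])
    have q3: "c \<le> normal_density 0 (sqrt rho2) x"
      if "k < K" "j < D" "\<bar>x - As $$ (k,j)\<bar> \<le> sqrt s" for k j x
      by (rule dens[OF that sq1])
    have mb1: "Lb \<le> pX s" unfolding Lb_def pX_def
      by (rule marg_bounds(1)[where As=As, OF X Zc rho s(1) less_imp_le[OF c] sq0 Qlow q2 q3])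
    have mb2: "pX s \<le> Ub" unfolding Ub_def pX_def
      by (rule marg_bounds(2)[where As=As, OF X Zc rho s(1) less_imp_le[OF c] sq0 Qlow q2 q3])
    note mb = mb1 mb2
    have Lb: "Lb > 0" unfolding Lb_def using c s by simp
    have pX: "pX s > 0" using Lb mb by linarith
    have lnU: "ln Ub = - real (N * D) / 2 * (ln (2 * pi) + ln s) - T / (2 * s)"
      unfolding Ub_def using s by (simp add: ln_mult)
    have lnL: "ln Lb = - real (N * D) / 2 * (ln (2 * pi) + ln s) - (T + real (N * D * K^2) * s) / (2 * s)
               + real (K * D) * (ln c + ln 2 + ln s / 2)"
      unfolding Lb_def using s c by (simp add: ln_mult ln_realpow ln_sqrt diff_divide_distrib add_divide_distrib algebra_simps)
    have "ln (pX s) \<le> ln Ub" using pX mb by simp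
    then have "-2 * s * ln Ub \<le> -2 * s * ln (pX s)" using s by (simp add: mult_left_mono)
    moreover have "-2 * s * ln Ub = lo s" unfolding lnU lo_def using s by (simp add: field_simps)
    moreover have "ln Lb \<le> ln (pX s)" using Lb mb by simp
    then have "-2 * s * ln (pX s) \<le> -2 * s * ln Lb" using s by (simp add: mult_left_mono)
    moreover have "-2 * s * ln Lb = hi s" unfolding lnL hi_def using s c
      by (simp add: field_simps ln_mult)
    ultimately show ?thesis using pX by simp
  qed
  have ev: "eventually (\<lambda>s. 0 < s \<and> s \<le> 1) (at_right (0::real))"
    unfolding eventually_at_right_field by (intro exI[of _ 1]) auto
  have lo_lim: "(lo \<longlongrightarrow> T) (at_right 0)" unfolding lo_def by real_asymp
  have hi_lim: "(hi \<longlongrightarrow> T) (at_right 0)" unfolding hi_def by real_asymp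
  have F1: "((\<lambda>s. -2 * s * ln (pX s)) \<longlongrightarrow> T) (at_right 0)"
  proof (rule tendsto_sandwich[OF _ _ lo_lim hi_lim])
    show "eventually (\<lambda>s. lo s \<le> -2 * s * ln (pX s)) (at_right 0)"
      using ev by (rule eventually_mono) (use bounds in auto)
    show "eventually (\<lambda>s. -2 * s * ln (pX s) \<le> hi s) (at_right 0)"
      using ev by (rule eventually_mono) (use bounds in auto)
  qed
  define pZ where "pZ s = ibp_prob (exp (- lam2 / (2 * s))) Z" for s
  have pZpos: "pZ s > 0" for s unfolding pZ_def ibp using W by simp
  have F2eq: "-2 * s * ln (pZ s) = real K * lam2 + 2 * s * (exp (- lam2 / (2 * s)) * H) - 2 * s * ln W"
    if "s > 0" for s
  proof -
    have "ln (pZ s) = real K * (- lam2 / (2 * s)) - exp (- lam2 / (2 * s)) * H + ln W"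
      unfolding pZ_def ibp H_def[symmetric] using W by (simp add: ln_mult ln_realpow)
    then show ?thesis using that by (simp add: field_simps)
  qed
  have G0: "((\<lambda>s. 2 * s * (exp (- lam2 / (2 * s)) * H)) \<longlongrightarrow> 0) (at_right 0)"
  proof (rule tendsto_sandwich[of "\<lambda>_. 0" _ _ "\<lambda>s. 2 * s * H"])
    show "eventually (\<lambda>s. 0 \<le> 2 * s * (exp (- lam2 / (2 * s)) * H)) (at_right (0::real))"
      using ev by (rule eventually_mono) (use H in auto)
    show "eventually (\<lambda>s. 2 * s * (exp (- lam2 / (2 * s)) * H) \<le> 2 * s * H) (at_right (0::real))"
      using ev
    proof (rule eventually_mono)
      fix s :: real assume s: "0 < s \<and> s \<le> 1"
      have "exp (- lam2 / (2 * s)) \<le> 1" using s lam by simp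
      then have "exp (- lam2 / (2 * s)) * H \<le> 1 * H" using H by (intro mult_right_mono) auto
      then show "2 * s * (exp (- lam2 / (2 * s)) * H) \<le> 2 * s * H" using s by simp
    qed
    show "((\<lambda>_. 0::real) \<longlongrightarrow> 0) (at_right 0)" by simp
    show "((\<lambda>s. 2 * s * H) \<longlongrightarrow> 0) (at_right (0::real))" by real_asymp
  qed
  have F2: "((\<lambda>s. -2 * s * ln (pZ s)) \<longlongrightarrow> real K * lam2) (at_right 0)"
  proof (rule Lim_transform_eventually)
    have w: "((\<lambda>s. 2 * s * ln W) \<longlongrightarrow> 0) (at_right (0::real))" by real_asymp
    have "((\<lambda>s. real K * lam2 + 2 * s * (exp (- lam2 / (2 * s)) * H) - 2 * s * ln W)
                 \<longlongrightarrow> real K * lam2 + 0 - 0) (at_right 0)"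
      by (intro tendsto_diff tendsto_add tendsto_const G0 w)
    then show "((\<lambda>s. real K * lam2 + 2 * s * (exp (- lam2 / (2 * s)) * H) - 2 * s * ln W)
                 \<longlongrightarrow> real K * lam2) (at_right 0)"
      by simp
    show "eventually (\<lambda>s. real K * lam2 + 2 * s * (exp (- lam2 / (2 * s)) * H) - 2 * s * ln W
             = -2 * s * ln (pZ s)) (at_right 0)"
      using ev by (rule eventually_mono) (use F2eq in auto)
  qed
  have F: "((\<lambda>s. - 2 * s * ln (joint_XZ s lam2 rho2 X Z)) \<longlongrightarrow> L) (at_right 0)"
  proof (rule Lim_transform_eventually)
    show "((\<lambda>s. -2 * s * ln (pX s) + -2 * s * ln (pZ s)) \<longlongrightarrow> L) (at_right 0)"
      unfolding L_def by (intro tendsto_add F1 F2)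
    show "eventually (\<lambda>s. -2 * s * ln (pX s) + -2 * s * ln (pZ s)
            = - 2 * s * ln (joint_XZ s lam2 rho2 X Z)) (at_right 0)"
      using ev
    proof (rule eventually_mono)
      fix s :: real assume s: "0 < s \<and> s \<le> 1"
      have "pX s > 0" using bounds s by auto
      then have "ln (joint_XZ s lam2 rho2 X Z) = ln (pX s) + ln (pZ s)"
        unfolding joint_XZ_def pX_def pZ_def using pZpos[of s] by (simp add: ln_mult pZ_def pX_def)
      then show "-2 * s * ln (pX s) + -2 * s * ln (pZ s) = - 2 * s * ln (joint_XZ s lam2 rho2 X Z)"
        by (simp add: algebra_simps)
    qed
  qed
  have "((\<lambda>s. - 2 * s * ln (joint_XZ s lam2 rho2 X Z) / L) \<longlongrightarrow> L / L) (at_right 0)"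
    by (intro tendsto_divide F tendsto_const L)
  then have "(\<lambda>s. - 2 * s * ln (joint_XZ s lam2 rho2 X Z)) \<sim>[at_right 0] (\<lambda>s. L)"
    using L by (intro asymp_equivI') simp
  then show ?thesis unfolding L_def T_def M_def K_def .
qed

end
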